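(* Let $k\ge2$ and $n\ge 2k$ be integers, and set $\alpha=\frac{2k}{k+1}$, $\beta=\frac nk-2$, $a=\frac{n+\alpha}{2}$, $b=\frac{\alpha+\beta}{2}$, $c=\frac n2$, $d_1=2a+b-2c$, $d_2=c-a+1$, $d_3=4ab(k-1)$. Then the function $$g(t)=\frac{d_1t-d_2(1-t)+\sqrt{(d_1t-d_2(1-t))^2+d_3t}}{2c}$$ is concave on $[0,+\infty)$. *)

theory Defs
  imports "HOL-Analysis.Analysis"
begin

end

theory Submission
  imports Defs
begin

lemma gen:
  fixes p q e c :: real
  assumes p: "p > 0" and q: "q > 0" and e: "e \<ge> 4*p*q" and c: "c > 0"
  shows "concave_on {0..} (\<lambda>t. (p*t - q + sqrt((p*t-q)^2 + e*t))/(2*c))"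
proof -
  define Q where "Q t = (p*t-q)^2 + e*t" for t
  define Q' where "Q' t = 2*p*(p*t-q) + e" for t
  have Qpos: "Q t > 0" if "t \<ge> 0" for t
  proof (cases "t = 0")
    case True then show ?thesis using q by (simp add: Q_def)
  next
    case False
    have "4*p*q > 0" using p q by simp
    then have "e > 0" using e by linarith
    then have "e*t > 0" using that False by simp
    then show ?thesis unfolding Q_def by (smt (verit) zero_le_power2)
  qed
  have dQ: "(Q has_real_derivative Q' t) (at t)" for t
  proof -
    have "((\<lambda>t. (p*t-q)*(p*t-q) + e*t) has_real_derivative ((p*1-0)*(p*t-q) + (p*t-q)*(p*1-0) + e*1)) (at t)"
      by (auto intro!: derivative_eq_intros simp: algebra_simps)
    moreover have "(\<lambda>t. (p*t-q)*(p*t-q) + e*t) = Q" by (auto simp: Q_def power2_eq_square)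
    moreover have "(p*1-0)*(p*t-q) + (p*t-q)*(p*1-0) + e*1 = Q' t" by (simp add: Q'_def algebra_simps)
    ultimately show ?thesis by simp
  qed
  have dS: "((\<lambda>t. sqrt (Q t)) has_real_derivative Q' t / (2 * sqrt (Q t))) (at t)" if "t \<ge> 0" for t
  proof -
    have "((\<lambda>t. sqrt (Q t)) has_real_derivative inverse (sqrt (Q t)) / 2 * Q' t) (at t)"
      using DERIV_chain2[OF DERIV_real_sqrt[OF Qpos[OF that]] dQ] .
    then show ?thesis by (simp add: field_simps)
  qed
  define h' where "h' t = -(p + Q' t / (2 * sqrt (Q t)))/(2*c)" for t
  define h'' where "h'' t = -((2*p*p*(2 * sqrt (Q t)) - Q' t * (Q' t / sqrt (Q t))) / (2 * sqrt (Q t))^2)/(2*c)" for t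
  have "convex_on {0..} (\<lambda>t. - ((p*t - q + sqrt(Q t))/(2*c)))"
  proof (rule f''_ge0_imp_convex[where f' = h' and f'' = h''])
    show "convex {0::real..}" by simp
  next
    fix t :: real assume "t \<in> {0..}"
    then have t: "t \<ge> 0" by simp
    have dl: "((\<lambda>t. p*t - q) has_real_derivative p) (at t)"
      by (auto intro!: derivative_eq_intros)
    have "((\<lambda>t. - ((p*t - q + sqrt(Q t))/(2*c))) has_real_derivative - ((p + Q' t / (2 * sqrt (Q t)))/(2*c))) (at t)"
      by (intro DERIV_minus DERIV_cdivide DERIV_add dl dS t)
    moreover have "h' t = - ((p + Q' t / (2 * sqrt (Q t)))/(2*c))" by (simp only: h'_def)
    ultimately show "((\<lambda>t. - ((p*t - q + sqrt(Q t))/(2*c))) has_real_derivative h' t) (at t)"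
      by (simp only:)
  next
    fix t :: real assume "t \<in> {0..}"
    then have t: "t \<ge> 0" by simp
    have Qt: "Q t > 0" using Qpos t .
    have s: "sqrt (Q t) > 0" using Qt by simp
    have dQ': "(Q' has_real_derivative 2*p*p) (at t)"
    proof -
      have "((\<lambda>t. 2*p*(p*t-q) + e) has_real_derivative 2*p*(p*1-0) + 0) (at t)"
        by (auto intro!: derivative_eq_intros simp: algebra_simps)
      then show ?thesis by (simp add: Q'_def[abs_def])
    qed
    have dS2: "((\<lambda>t. 2 * sqrt (Q t)) has_real_derivative 2 * (Q' t / (2 * sqrt (Q t)))) (at t)"
      by (intro DERIV_cmult dS t)
    have "((\<lambda>t. -(p + Q' t / (2 * sqrt (Q t)))/(2*c)) has_real_derivative
       -(0 + (2*p*p*(2 * sqrt (Q t)) - Q' t * (2 * (Q' t / (2 * sqrt (Q t))))) / (2 * sqrt (Q t) * (2 * sqrt (Q t))))/(2*c)) (at t)"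
      using s by (intro DERIV_minus DERIV_cdivide DERIV_add DERIV_const DERIV_divide dQ' dS2) auto
    moreover have "-(0 + (2*p*p*(2 * sqrt (Q t)) - Q' t * (2 * (Q' t / (2 * sqrt (Q t))))) / (2 * sqrt (Q t) * (2 * sqrt (Q t))))/(2*c) = h'' t"
      unfolding h''_def using s by (simp add: power2_eq_square)
    ultimately show "(h' has_real_derivative h'' t) (at t)"
      unfolding h'_def[abs_def] by simp
  next
    fix t :: real assume "t \<in> {0..}"
    then have t: "t \<ge> 0" by simp
    have Qt: "Q t > 0" using Qpos t .
    have sq: "sqrt (Q t) * sqrt (Q t) = Q t" using Qt by simp
    have key: "4*p*p*Q t \<le> Q' t * Q' t"
    proof -
      have "Q' t * Q' t - 4*p*p*Q t = (e - 2*p*q)^2 - 4*p*p*q*q"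
        by (simp add: Q_def Q'_def power2_eq_square algebra_simps)
      moreover have "(e - 2*p*q)^2 \<ge> (2*p*q)^2"
        using e p q by (intro power_mono) auto
      ultimately show ?thesis by (simp add: power2_eq_square algebra_simps)
    qed
    have s: "sqrt (Q t) > 0" using Qt by simp
    have "2*p*p*(2 * sqrt (Q t)) - Q' t * (Q' t / sqrt (Q t)) \<le> 0"
    proof -
      have "2*p*p*(2 * sqrt (Q t)) - Q' t * (Q' t / sqrt (Q t)) = (4*p*p*Q t - Q' t * Q' t)/ sqrt (Q t)"
        using s sq by (simp add: field_simps)
      also have "\<dots> \<le> 0" using key s by (intro divide_nonpos_pos) auto
      finally show ?thesis .
    qed
    then show "0 \<le> h'' t" unfolding h''_def using c
      by (simp add: divide_nonpos_nonneg)
  qed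
  then show ?thesis by (simp add: concave_on_def Q_def)
qed
theorem lemma6p1:
  fixes k n :: nat and \<alpha> \<beta> a b c d1 d2 d3 :: real and g :: "real \<Rightarrow> real"
  assumes "k \<ge> 2" and "n \<ge> 2 * k"
    and "\<alpha> = 2 * real k / (real k + 1)"
    and "\<beta> = real n / real k - 2"
    and "a = (real n + \<alpha>) / 2"
    and "b = (\<alpha> + \<beta>) / 2"
    and "c = real n / 2"
    and "d1 = 2 * a + b - 2 * c"
    and "d2 = c - a + 1"
    and "d3 = 4 * a * b * (real k - 1)"
    and "\<And>t. g t = (d1 * t - d2 * (1 - t)
                 + sqrt ((d1 * t - d2 * (1 - t))^2 + d3 * t)) / (2 * c)"
  shows "concave_on {0..} g"
proof -
  define K where "K = real k"
  define N where "N = real n"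
  have K: "K \<ge> 2" using assms(1) by (simp add: K_def)
  have N: "N \<ge> 2*K" using assms(2) by (simp add: K_def N_def)
  have al: "\<alpha> = 2*K/(K+1)" using assms(3) by (simp add: K_def)
  have al1: "\<alpha> \<ge> 4/3" using K unfolding al by (simp add: field_simps)
  have al2: "\<alpha> \<le> 2" using K unfolding al by (simp add: field_simps)
  have "N/K \<ge> 2" using N K by (simp add: field_simps)
  then have be: "\<beta> \<ge> 0" using assms(4) by (simp add: K_def N_def)
  have bb: "b \<ge> 2/3" using assms(6) al1 be by simp
  have aa: "a \<ge> 2" using assms(5) al1 N K by (simp add: N_def)
  have cc: "c > 0" using assms(7) N K by (simp add: N_def)
  have "d2 = 1 - \<alpha>/2" using assms(5,7,9) by simp
  then have q: "d2 = 1/(K+1)" using al K by (simp add: field_simps)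
  have qpos: "d2 > 0" using q K by simp
  have p: "d1 + d2 = \<alpha>/2 + b + 1" using assms(5,7,8,9) by simp
  have ppos: "d1 + d2 > 0" using p al1 bb by simp
  have KK: "(K-1)*(K+1) \<ge> 3" proof -
    have "K*K \<ge> 2*2" using K by (intro mult_mono) auto
    then show ?thesis by (simp add: algebra_simps)
  qed
  have "a*b*((K-1)*(K+1)) \<ge> 2*b*3" using aa bb KK
    by (intro mult_mono) auto
  then have "d3*(K+1) \<ge> 4*(\<alpha>/2 + b + 1)"
  proof -
    have "d3*(K+1) = 4*(a*b*((K-1)*(K+1)))" by (simp add: assms(10) K_def algebra_simps)
    have "4*(\<alpha>/2 + b + 1) \<le> 4*(2*b*3)" using bb al2 by simp
    also have "\<dots> \<le> 4*(a*b*((K-1)*(K+1)))" using \<open>a*b*((K-1)*(K+1)) \<ge> 2*b*3\<close> by simp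
    also have "\<dots> = d3*(K+1)" using \<open>d3*(K+1) = 4*(a*b*((K-1)*(K+1)))\<close> by linarith
    finally show ?thesis .
  qed
  then have e0: "4*(\<alpha>/2 + b + 1)/(K+1) \<le> d3" using K by (simp add: pos_divide_le_eq)
  have "4*(d1+d2)*d2 = 4*(\<alpha>/2 + b + 1)/(K+1)" by (subst p, subst q) simp
  then have e: "d3 \<ge> 4*(d1+d2)*d2" using e0 by simp
  have geq: "g = (\<lambda>t. ((d1+d2)*t - d2 + sqrt(((d1+d2)*t-d2)^2 + d3*t))/(2*c))"
  proof
    fix t
    have "d1 * t - d2 * (1 - t) = (d1+d2)*t - d2" by (simp add: algebra_simps)
    then show "g t = ((d1+d2)*t - d2 + sqrt(((d1+d2)*t-d2)^2 + d3*t))/(2*c)"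
      using assms(11) by simp
  qed
  show ?thesis unfolding geq by (rule gen[OF ppos qpos e cc])
qed

end
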